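(* Let $X$ be a uniformly locally finite metric space and $h\colon X\to\mathbb{R}$ a map, regarded also as the multiplication operator on $\ell_2(X)$. The following are equivalent: (1) the map $h$ is coarse; (2) $\mathrm{dom}(h)$ is invariant under partial translations and, for every $r>0$, $\sup_f\|[h,v_f]\|<\infty$, the supremum over all partial $r$-translations $f$ of $X$; (3) $\mathrm{dom}(h)$ is invariant under partial translations and $\|[h,v_f]\|<\infty$ for every partial translation $f$ of $X$.
   Context: Uniformly locally finite: $\sup_x|B_r(x)|<\infty$ for all $r>0$. The multiplication operator of $h$ has domain $\{\xi\in\ell_2(X):\sum_x|h_x\xi_x|^2<\infty\}$ and $(h\xi)_x=h_x\xi_x$. A map $h\colon X\to\mathbb{R}$ is coarse if for every $r>0$ there is $s>0$ with $|h_x-h_z|\le s$ whenever $d(x,z)\le r$. A partial translation is a bijection $f\colon\mathrm{dom}(f)\subseteq X\to\mathrm{ran}(f)\subseteq X$ with $\sup_{x\in\mathrm{dom}(f)}d(x,f(x))<\infty$; it is a partial $r$-translation if this supremum is at most $r$. $v_f\delta_x=\delta_{f(x)}$ for $x\in\mathrm{dom}(f)$ and $0$ otherwise. A subspace $E$ is invariant under partial translations if $v_f(E)\subseteq E$ for all partial translations $f$. $[h,v_f]=hv_f-v_fh$ on $\mathrm{dom}(h)$, and $\|\cdot\|$ denotes the possibly infinite operator norm on the domain. *)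

theory Defs
  imports "HOL-Analysis.Analysis"
begin

definition unif_locally_finite :: "'a::metric_space itself \<Rightarrow> bool" where
  "unif_locally_finite _ \<longleftrightarrow>
     (\<forall>r>0. \<exists>N::nat. \<forall>x::'a. finite (cball x r) \<and> card (cball x r) \<le> N)"

definition coarse_map :: "('a::metric_space \<Rightarrow> real) \<Rightarrow> bool" where
  "coarse_map h \<longleftrightarrow> (\<forall>r>0. \<exists>s>0. \<forall>x z. dist x z \<le> r \<longrightarrow> \<bar>h x - h z\<bar> \<le> s)"

definition l2 :: "('a \<Rightarrow> complex) set" where
  "l2 = {\<xi>. (\<lambda>x. (norm (\<xi> x))\<^sup>2) summable_on UNIV}"

definition l2norm :: "('a \<Rightarrow> complex) \<Rightarrow> ennreal" where
  "l2norm \<xi> = (if (\<lambda>x. (norm (\<xi> x))\<^sup>2) summable_on UNIV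
                then ennreal (sqrt (infsum (\<lambda>x. (norm (\<xi> x))\<^sup>2) UNIV)) else \<infinity>)"

definition mult_op :: "('a \<Rightarrow> real) \<Rightarrow> ('a \<Rightarrow> complex) \<Rightarrow> ('a \<Rightarrow> complex)" where
  "mult_op h \<xi> = (\<lambda>x. complex_of_real (h x) * \<xi> x)"

definition mult_dom :: "('a \<Rightarrow> real) \<Rightarrow> ('a \<Rightarrow> complex) set" where
  "mult_dom h = {\<xi> \<in> l2. (\<lambda>x. (norm (complex_of_real (h x) * \<xi> x))\<^sup>2) summable_on UNIV}"

definition partial_translation :: "'a::metric_space set \<Rightarrow> ('a \<Rightarrow> 'a) \<Rightarrow> bool" where
  "partial_translation D f \<longleftrightarrow> inj_on f D \<and> (\<exists>r. \<forall>x\<in>D. dist x (f x) \<le> r)"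

definition partial_r_translation :: "real \<Rightarrow> 'a::metric_space set \<Rightarrow> ('a \<Rightarrow> 'a) \<Rightarrow> bool" where
  "partial_r_translation r D f \<longleftrightarrow> inj_on f D \<and> (\<forall>x\<in>D. dist x (f x) \<le> r)"

text \<open>v_f delta_x = delta_{f x} for x in D, 0 otherwise\<close>
definition vop :: "'a set \<Rightarrow> ('a \<Rightarrow> 'a) \<Rightarrow> ('a \<Rightarrow> complex) \<Rightarrow> ('a \<Rightarrow> complex)" where
  "vop D f \<xi> = (\<lambda>y. if y \<in> f ` D then \<xi> (the_inv_into D f y) else 0)"

definition invariant_under_pt :: "('a::metric_space \<Rightarrow> complex) set \<Rightarrow> bool" where
  "invariant_under_pt E \<longleftrightarrow> (\<forall>D f. partial_translation D f \<longrightarrow> vop D f ` E \<subseteq> E)"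

definition commutator :: "('a \<Rightarrow> real) \<Rightarrow> 'a set \<Rightarrow> ('a \<Rightarrow> 'a) \<Rightarrow> ('a \<Rightarrow> complex) \<Rightarrow> ('a \<Rightarrow> complex)" where
  "commutator h D f \<xi> = (\<lambda>y. mult_op h (vop D f \<xi>) y - vop D f (mult_op h \<xi>) y)"

definition op_norm_on :: "('a \<Rightarrow> complex) set \<Rightarrow> (('a \<Rightarrow> complex) \<Rightarrow> ('a \<Rightarrow> complex)) \<Rightarrow> ennreal" where
  "op_norm_on E T = (SUP \<xi>\<in>{\<xi>\<in>E. l2norm \<xi> \<le> 1}. l2norm (T \<xi>))"

end

theory Submission
  imports Defs
begin


lemma transport:
  fixes \<xi> c :: "'a \<Rightarrow> complex"
  assumes inj: "inj_on f D" and sx: "(\<lambda>x. (norm (\<xi> x))\<^sup>2) summable_on UNIV"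
    and cK: "\<And>x. x \<in> D \<Longrightarrow> norm (c x) \<le> K"
    and eta: "\<eta> = (\<lambda>y. if y \<in> f ` D then c (the_inv_into D f y) * \<xi> (the_inv_into D f y) else 0)"
  shows "(\<lambda>y. (norm (\<eta> y))\<^sup>2) summable_on UNIV \<and>
         infsum (\<lambda>y. (norm (\<eta> y))\<^sup>2) UNIV \<le> K\<^sup>2 * infsum (\<lambda>x. (norm (\<xi> x))\<^sup>2) UNIV"
proof -
  define F where "F = (\<lambda>y. (norm (\<eta> y))\<^sup>2)"
  have Ff: "(F \<circ> f) x = (norm (c x * \<xi> x))\<^sup>2" if "x \<in> D" for x
    using that inj by (simp add: F_def eta the_inv_into_f_f)
  have sD: "(\<lambda>x. (norm (\<xi> x))\<^sup>2) summable_on D"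
    using sx summable_on_subset_banach by blast
  have sKD: "(\<lambda>x. K\<^sup>2 * (norm (\<xi> x))\<^sup>2) summable_on D"
    using sD by (rule summable_on_cmult_right)
  have le: "(F \<circ> f) x \<le> K\<^sup>2 * (norm (\<xi> x))\<^sup>2" if "x \<in> D" for x
  proof -
    have "(norm (c x * \<xi> x))\<^sup>2 = (norm (c x))\<^sup>2 * (norm (\<xi> x))\<^sup>2"
      by (simp add: norm_mult power_mult_distrib)
    also have "\<dots> \<le> K\<^sup>2 * (norm (\<xi> x))\<^sup>2"
      by (intro mult_right_mono power_mono cK that) auto
    finally show ?thesis using Ff that by simp
  qed
  have sFf: "(F \<circ> f) summable_on D"
  proof (rule summable_on_comparison_test[OF sKD le])
    fix x show "0 \<le> (F \<circ> f) x" by (simp add: F_def)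
  qed
  have sFfD: "F summable_on (f ` D)" using sFf summable_on_reindex[OF inj] by blast
  have zero: "F y = 0" if "y \<notin> f ` D" for y using that by (simp add: F_def eta)
  have s: "F summable_on UNIV"
    using sFfD summable_on_cong_neutral[of UNIV "f ` D" F F] zero by blast
  have "infsum F UNIV = infsum F (f ` D)"
    using infsum_cong_neutral[of UNIV "f ` D" F F] zero by auto
  also have "\<dots> = infsum (F \<circ> f) D" by (rule infsum_reindex[OF inj])
  also have "\<dots> \<le> infsum (\<lambda>x. K\<^sup>2 * (norm (\<xi> x))\<^sup>2) D"
    by (rule infsum_mono[OF sFf sKD le])
  also have "\<dots> = K\<^sup>2 * infsum (\<lambda>x. (norm (\<xi> x))\<^sup>2) D"
    by (rule infsum_cmult_right[OF sD])
  also have "\<dots> \<le> K\<^sup>2 * infsum (\<lambda>x. (norm (\<xi> x))\<^sup>2) UNIV"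
    by (intro mult_left_mono infsum_mono_neutral[OF sD sx]) auto
  finally show ?thesis using s by (simp add: F_def)
qed

lemma l2_add:
  assumes "\<xi> \<in> l2" "\<zeta> \<in> l2"
  shows "(\<lambda>x. \<xi> x + \<zeta> x) \<in> l2"
proof -
  have a: "(\<lambda>x. 2 * (norm (\<xi> x))\<^sup>2 + 2 * (norm (\<zeta> x))\<^sup>2) summable_on UNIV"
    using assms unfolding l2_def
    by (intro summable_on_add summable_on_cmult_right) auto
  have b: "(norm (\<xi> x + \<zeta> x))\<^sup>2 \<le> 2 * (norm (\<xi> x))\<^sup>2 + 2 * (norm (\<zeta> x))\<^sup>2" for x
  proof -
    have "norm (\<xi> x + \<zeta> x) \<le> norm (\<xi> x) + norm (\<zeta> x)" by (rule norm_triangle_ineq)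
    hence "(norm (\<xi> x + \<zeta> x))\<^sup>2 \<le> (norm (\<xi> x) + norm (\<zeta> x))\<^sup>2"
      by (intro power_mono) auto
    also have "\<dots> \<le> 2 * (norm (\<xi> x))\<^sup>2 + 2 * (norm (\<zeta> x))\<^sup>2"
    proof -
      have "0 \<le> (norm (\<xi> x) - norm (\<zeta> x))\<^sup>2" by simp
      thus ?thesis unfolding power2_diff power2_sum by linarith
    qed
    finally show ?thesis .
  qed
  show ?thesis unfolding l2_def
    using summable_on_comparison_test[OF a b] by auto
qed

lemma l2norm_single:
  "l2norm (\<lambda>y. if y = a then c else 0) = ennreal (norm c)"
proof -
  have eq: "(\<lambda>y. (norm (if y = a then c else 0))\<^sup>2) = (\<lambda>y. if y = a then (norm c)\<^sup>2 else 0)"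
    by auto
  have s: "(\<lambda>y. if y = a then (norm c)\<^sup>2 else (0::real)) summable_on UNIV"
    by (rule finite_nonzero_values_imp_summable_on) (auto intro: finite_subset[of _ "{a}"])
  have i: "infsum (\<lambda>y. if y = a then (norm c)\<^sup>2 else (0::real)) UNIV = infsum (\<lambda>y. (norm c)\<^sup>2) {a}"
    by (rule infsum_cong_neutral) auto
  show ?thesis unfolding l2norm_def eq using s i by simp
qed



lemma comm_form:
  assumes "inj_on f D"
  shows "commutator h D f \<xi> = (\<lambda>y. if y \<in> f ` D then
      complex_of_real (h (f (the_inv_into D f y)) - h (the_inv_into D f y)) * \<xi> (the_inv_into D f y) else 0)"
proof
  fix y show "commutator h D f \<xi> y = (if y \<in> f ` D then
      complex_of_real (h (f (the_inv_into D f y)) - h (the_inv_into D f y)) * \<xi> (the_inv_into D f y) else 0)"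
    using assms by (auto simp: commutator_def mult_op_def vop_def f_the_inv_into_f algebra_simps)
qed

lemma comm_l2:
  assumes s: "\<forall>x z. dist x z \<le> r \<longrightarrow> \<bar>h x - h z\<bar> \<le> s"
    and inj: "inj_on f D" and disp: "\<forall>x\<in>D. dist x (f x) \<le> r" and xi: "\<xi> \<in> l2"
  shows "commutator h D f \<xi> \<in> l2 \<and>
    infsum (\<lambda>y. (norm (commutator h D f \<xi> y))\<^sup>2) UNIV \<le> s\<^sup>2 * infsum (\<lambda>x. (norm (\<xi> x))\<^sup>2) UNIV"
proof -
  have cK: "norm (complex_of_real (h (f x) - h x)) \<le> s" if "x \<in> D" for x
  proof -
    have "dist x (f x) \<le> r" using disp that by blast
    hence "\<bar>h x - h (f x)\<bar> \<le> s" using s by blast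
    moreover have "norm (complex_of_real (h (f x) - h x)) = \<bar>h (f x) - h x\<bar>" by (rule norm_of_real)
    ultimately show ?thesis by (simp add: abs_minus_commute)
  qed
  have sx: "(\<lambda>x. (norm (\<xi> x))\<^sup>2) summable_on UNIV" using xi by (simp add: l2_def)
  have T: "(\<lambda>y. (norm (commutator h D f \<xi> y))\<^sup>2) summable_on UNIV \<and>
         infsum (\<lambda>y. (norm (commutator h D f \<xi> y))\<^sup>2) UNIV \<le> s\<^sup>2 * infsum (\<lambda>x. (norm (\<xi> x))\<^sup>2) UNIV"
    by (rule transport[where c="\<lambda>x. complex_of_real (h (f x) - h x)", OF inj sx cK comm_form[OF inj]])
  show ?thesis unfolding l2_def using T by blast
qed



lemma vop_l2:
  assumes inj: "inj_on f D" and xi: "\<xi> \<in> l2"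
  shows "vop D f \<xi> \<in> l2"
proof -
  have eq: "vop D f \<xi> = (\<lambda>y. if y \<in> f ` D then (\<lambda>_. 1) (the_inv_into D f y) * \<xi> (the_inv_into D f y) else 0)"
    unfolding vop_def by (rule ext) simp
  have sx: "(\<lambda>x. (norm (\<xi> x))\<^sup>2) summable_on UNIV" using xi by (simp add: l2_def)
  have "(\<lambda>y. (norm (vop D f \<xi> y))\<^sup>2) summable_on UNIV"
    using transport[where c="\<lambda>_. 1" and K=1, OF inj sx _ eq] by simp
  thus ?thesis unfolding l2_def by blast
qed

lemma coarse_P:
  fixes h :: "'a::metric_space \<Rightarrow> real"
  assumes c: "coarse_map h"
  shows "invariant_under_pt (mult_dom h)"
    and "r > 0 \<Longrightarrow> \<exists>s. \<forall>(D::'a set) f \<xi>. partial_r_translation r D f \<longrightarrow> \<xi> \<in> mult_dom h \<longrightarrow> l2norm \<xi> \<le> 1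
             \<longrightarrow> l2norm (commutator h D f \<xi>) \<le> ennreal s"
proof -
  show "invariant_under_pt (mult_dom h)"
    unfolding invariant_under_pt_def
  proof (intro allI impI subsetI)
    fix D f \<eta> assume pt: "partial_translation D f" and "\<eta> \<in> vop D f ` mult_dom h"
    then obtain \<xi> where xi: "\<xi> \<in> mult_dom h" and eta: "\<eta> = vop D f \<xi>" by blast
    from pt obtain r0 where inj: "inj_on f D" and r0: "\<forall>x\<in>D. dist x (f x) \<le> r0"
      unfolding partial_translation_def by blast
    obtain s where s: "\<forall>x z. dist x z \<le> max r0 1 \<longrightarrow> \<bar>h x - h z\<bar> \<le> s"
      using c unfolding coarse_map_def by (meson less_max_iff_disj zero_less_one)
    have disp: "\<forall>x\<in>D. dist x (f x) \<le> max r0 1" using r0 by force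
    have xl2: "\<xi> \<in> l2" and hxl2: "mult_op h \<xi> \<in> l2"
      using xi by (auto simp: mult_dom_def l2_def mult_op_def)
    have v: "vop D f \<xi> \<in> l2" by (rule vop_l2[OF inj xl2])
    have "(\<lambda>y. commutator h D f \<xi> y + vop D f (mult_op h \<xi>) y) \<in> l2"
      by (rule l2_add[OF conjunct1[OF comm_l2[OF s inj disp xl2]] vop_l2[OF inj hxl2]])
    moreover have "(\<lambda>y. commutator h D f \<xi> y + vop D f (mult_op h \<xi>) y) = mult_op h (vop D f \<xi>)"
      by (simp add: commutator_def)
    ultimately have "mult_op h (vop D f \<xi>) \<in> l2" by simp
    thus "\<eta> \<in> mult_dom h" using v eta by (simp add: mult_dom_def l2_def mult_op_def)
  qed
next
  assume r: "r > 0"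
  obtain s where s0: "s > 0" and s: "\<forall>x z. dist x z \<le> r \<longrightarrow> \<bar>h x - h z\<bar> \<le> s"
    using c r unfolding coarse_map_def by blast
  show "\<exists>s. \<forall>(D::'a set) f \<xi>. partial_r_translation r D f \<longrightarrow> \<xi> \<in> mult_dom h \<longrightarrow> l2norm \<xi> \<le> 1
             \<longrightarrow> l2norm (commutator h D f \<xi>) \<le> ennreal s"
  proof (intro exI allI impI)
    fix D :: "'a set" and f \<xi> assume pr: "partial_r_translation r D f" and xi: "\<xi> \<in> mult_dom h" and n: "l2norm \<xi> \<le> 1"
    from pr have inj: "inj_on f D" and disp: "\<forall>x\<in>D. dist x (f x) \<le> r"
      unfolding partial_r_translation_def by auto
    have xl2: "\<xi> \<in> l2" using xi by (simp add: mult_dom_def)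
    define I where "I = infsum (\<lambda>x. (norm (\<xi> x))\<^sup>2) UNIV"
    define J where "J = infsum (\<lambda>y. (norm (commutator h D f \<xi> y))\<^sup>2) UNIV"
    have I0: "0 \<le> I" unfolding I_def by (rule infsum_nonneg) auto
    have "ennreal (sqrt I) \<le> 1" using n xl2 by (simp add: l2norm_def l2_def I_def)
    hence "sqrt I \<le> 1" by (simp add: ennreal_le_1)
    hence I1: "I \<le> 1" using I0 by (simp add: real_sqrt_le_1_iff)
    from comm_l2[OF s inj disp xl2] have cl2: "commutator h D f \<xi> \<in> l2" and J: "J \<le> s\<^sup>2 * I"
      by (auto simp: I_def J_def)
    have "s\<^sup>2 * I \<le> s\<^sup>2 * 1" using I1 by (intro mult_left_mono) auto
    hence "J \<le> s\<^sup>2" using J by simp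
    hence "sqrt J \<le> sqrt (s\<^sup>2)" by (rule real_sqrt_le_mono)
    hence "sqrt J \<le> s" using s0 by simp
    thus "l2norm (commutator h D f \<xi>) \<le> ennreal s"
      using cl2 by (simp add: l2norm_def l2_def J_def ennreal_leI)
  qed
qed



lemma avoid:
  fixes h :: "'a::metric_space \<Rightarrow> real"
  assumes fin: "\<forall>x::'a. finite (cball x r)" and F: "finite F"
    and nc: "\<forall>s>0. \<exists>x z. dist x z \<le> r \<and> \<bar>h x - h z\<bar> > s"
  shows "\<exists>x z. dist x z \<le> r \<and> \<bar>h x - h z\<bar> > s \<and> x \<notin> F \<and> z \<notin> F"
proof -
  define V where "V = insert 0 ((\<lambda>(p, q). \<bar>h p - h q\<bar>) ` (SIGMA p:F. cball p r))"
  have finV: "finite V" unfolding V_def using F fin by (intro finite_insert[THEN iffD2] finite_imageI finite_SigmaI) auto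
  define M where "M = Max V"
  have M0: "0 \<le> M" unfolding M_def using finV by (simp add: V_def)
  have MV: "\<bar>h p - h q\<bar> \<le> M" if "p \<in> F" "q \<in> cball p r" for p q
  proof -
    have "\<bar>h p - h q\<bar> \<in> V" unfolding V_def using that by force
    thus ?thesis unfolding M_def using finV by simp
  qed
  have "max s M + 1 > 0" using M0 by linarith
  then obtain x z where xz: "dist x z \<le> r" "\<bar>h x - h z\<bar> > max s M + 1" using nc by blast
  have "x \<notin> F"
  proof
    assume "x \<in> F"
    moreover have "z \<in> cball x r" using xz by simp
    ultimately have "\<bar>h x - h z\<bar> \<le> M" by (rule MV)
    thus False using xz by linarith
  qed
  moreover have "z \<notin> F"
  proof
    assume "z \<in> F"
    moreover have "x \<in> cball z r" using xz by (simp add: dist_commute)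
    ultimately have "\<bar>h z - h x\<bar> \<le> M" by (rule MV)
    thus False using xz by (simp add: abs_minus_commute)
  qed
  ultimately show ?thesis using xz by (intro exI[of _ x] exI[of _ z]) auto
qed

lemma l2norm_upper:
  assumes "\<xi> \<in> mult_dom h" "l2norm \<xi> \<le> 1"
  shows "l2norm (T \<xi>) \<le> op_norm_on (mult_dom h) T"
  unfolding op_norm_on_def by (rule SUP_upper) (use assms in auto)

lemma build:
  fixes h :: "'a::metric_space \<Rightarrow> real"
  assumes fin: "\<forall>x::'a. finite (cball x r)"
    and nc: "\<forall>s>0. \<exists>x z. dist x z \<le> r \<and> \<bar>h x - h z\<bar> > s"
  shows "\<exists>D f. partial_translation D f \<and> \<not> op_norm_on (mult_dom h) (commutator h D f) < \<infinity>"
proof -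
  define good where "good A n p \<longleftrightarrow> dist (fst p) (snd p) \<le> r \<and> \<bar>h (fst p) - h (snd p)\<bar> > real n
     \<and> fst p \<notin> fst ` A \<union> snd ` A \<and> snd p \<notin> fst ` A \<union> snd ` A" for A :: "('a \<times> 'a) set" and n p
  define pick where "pick A n = (SOME p. good A n p)" for A n
  have pick: "good A n (pick A n)" if "finite A" for A n
  proof -
    have fA: "finite (fst ` A \<union> snd ` A)" using that by simp
    obtain x z where "dist x z \<le> r \<and> \<bar>h x - h z\<bar> > real n \<and> x \<notin> fst ` A \<union> snd ` A \<and> z \<notin> fst ` A \<union> snd ` A"
      using avoid[OF fin _ nc, OF fA, of "real n"] by blast
    hence "good A n (x, z)" by (simp add: good_def)
    thus ?thesis unfolding pick_def by (rule someI)
  qed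
  define S where "S = rec_nat {} (\<lambda>n A. insert (pick A n) A)"
  have S0: "S 0 = {}" and SS: "S (Suc n) = insert (pick (S n) n) (S n)" for n by (simp_all add: S_def)
  have finS: "finite (S n)" for n by (induction n) (simp_all add: S0 SS)
  define P where "P n = pick (S n) n" for n
  have goodP: "good (S n) n (P n)" for n unfolding P_def by (rule pick[OF finS])
  have memS: "m < n \<Longrightarrow> P m \<in> S n" for m n
  proof (induction n)
    case 0 thus ?case by simp
  next
    case (Suc n) thus ?case by (cases "m = n") (auto simp: SS P_def)
  qed
  define X where "X n = fst (P n)" for n
  define Z where "Z n = snd (P n)" for n
  have dist_lt: "X m \<noteq> X n \<and> Z m \<noteq> Z n" if "m < n" for m n
  proof -
    have "P m \<in> S n" using memS that .
    moreover have "fst (P n) \<notin> fst ` S n" "snd (P n) \<notin> snd ` S n" using goodP[of n] by (auto simp: good_def)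
    ultimately show ?thesis unfolding X_def Z_def by (metis image_eqI)
  qed
  have injX: "inj X" and injZ: "inj Z"
    unfolding inj_def by (metis dist_lt linorder_neqE_nat)+
  define D where "D = range X"
  define f where "f y = Z (inv X y)" for y
  have fX: "f (X n) = Z n" for n unfolding f_def using injX by simp
  have injD: "inj_on f D" unfolding D_def inj_on_def using injZ by (auto simp: fX inj_eq)
  have pt: "partial_translation D f" unfolding partial_translation_def
  proof (intro conjI injD exI ballI)
    fix y assume "y \<in> D" then obtain n where "y = X n" unfolding D_def by blast
    moreover have "dist (X n) (Z n) \<le> r" using goodP[of n] by (simp add: good_def X_def Z_def)
    ultimately show "dist y (f y) \<le> r" by (simp add: fX)
  qed
  have fD: "f ` D = range Z" unfolding D_def by (auto simp: fX image_iff)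
  have tinv: "the_inv_into D f (Z m) = X m" for m
    using the_inv_into_f_f[OF injD, of "X m"] by (simp add: fX D_def)
  have big: "ennreal (real n) < op_norm_on (mult_dom h) (commutator h D f)" for n
  proof -
    define \<xi> where "\<xi> = (\<lambda>y. if y = X n then (1::complex) else 0)"
    have s1: "(\<lambda>x. (norm (\<xi> x))\<^sup>2) summable_on UNIV"
      by (rule finite_nonzero_values_imp_summable_on, rule finite_subset[of _ "{X n}"]) (auto simp: \<xi>_def)
    have s2: "(\<lambda>x. (norm (complex_of_real (h x) * \<xi> x))\<^sup>2) summable_on UNIV"
      by (rule finite_nonzero_values_imp_summable_on, rule finite_subset[of _ "{X n}"]) (auto simp: \<xi>_def)
    have "\<xi> \<in> mult_dom h" unfolding mult_dom_def l2_def using s1 s2 by blast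
    moreover have "l2norm \<xi> \<le> 1" unfolding \<xi>_def l2norm_single by simp
    ultimately have le: "l2norm (commutator h D f \<xi>) \<le> op_norm_on (mult_dom h) (commutator h D f)"
      by (rule l2norm_upper)
    have ceq: "commutator h D f \<xi> = (\<lambda>y. if y = Z n then complex_of_real (h (Z n) - h (X n)) else 0)"
    proof
      fix y
      show "commutator h D f \<xi> y = (if y = Z n then complex_of_real (h (Z n) - h (X n)) else 0)"
      proof (cases "y \<in> range Z")
        case True
        then obtain m where y: "y = Z m" by blast
        show ?thesis
          unfolding comm_form[OF injD] fD y tinv
          by (cases "m = n") (simp_all add: \<xi>_def fX inj_eq[OF injX] inj_eq[OF injZ])
      next
        case False
        thus ?thesis unfolding comm_form[OF injD] fD by auto
      qed
    qed
    have "ennreal (real n) < ennreal \<bar>h (Z n) - h (X n)\<bar>"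
      using goodP[of n] by (simp add: good_def X_def Z_def abs_minus_commute ennreal_less_iff)
    also have "\<dots> = l2norm (commutator h D f \<xi>)" unfolding ceq l2norm_single norm_of_real ..
    finally show ?thesis using le by simp
  qed
  have "\<not> op_norm_on (mult_dom h) (commutator h D f) < \<infinity>"
  proof
    assume "op_norm_on (mult_dom h) (commutator h D f) < \<infinity>"
    then obtain t where t: "op_norm_on (mult_dom h) (commutator h D f) = ennreal t" "0 \<le> t"
      unfolding infinity_ennreal_def less_top_ennreal by blast
    have "t \<le> real (nat \<lceil>t\<rceil>)" by linarith
    hence "ennreal t \<le> ennreal (real (nat \<lceil>t\<rceil>))" by (rule ennreal_leI)
    moreover have "ennreal (real (nat \<lceil>t\<rceil>)) < ennreal t" using big[of "nat \<lceil>t\<rceil>"] t(1) by (simp only:)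
    ultimately show False by (metis leD)
  qed
  thus ?thesis using pt by blast
qed


theorem proposition3p1p5:
  fixes h :: "'a::metric_space \<Rightarrow> real"
  assumes "unif_locally_finite TYPE('a)"
  shows "(coarse_map h
           \<longleftrightarrow> (invariant_under_pt (mult_dom h) \<and>
                (\<forall>r>0. (SUP (D, f)\<in>{(D, f). partial_r_translation r D f}.
                          op_norm_on (mult_dom h) (commutator h D f)) < \<infinity>)))
       \<and> (coarse_map h
           \<longleftrightarrow> (invariant_under_pt (mult_dom h) \<and>
                (\<forall>D f. partial_translation D f \<longrightarrow>
                          op_norm_on (mult_dom h) (commutator h D f) < \<infinity>)))"
proof -
  have fin: "\<forall>x::'a. finite (cball x r)" if "r > 0" for r
    using assms that unfolding unif_locally_finite_def by blast
  have C2: "(\<forall>r>0. (SUP (D, f)\<in>{(D, f). partial_r_translation r D f}.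
                          op_norm_on (mult_dom h) (commutator h D f)) < \<infinity>)" if c: "coarse_map h"
  proof (intro allI impI)
    fix r :: real assume r: "r > 0"
    obtain s where s: "\<forall>(D::'a set) f \<xi>. partial_r_translation r D f \<longrightarrow> \<xi> \<in> mult_dom h \<longrightarrow> l2norm \<xi> \<le> 1
             \<longrightarrow> l2norm (commutator h D f \<xi>) \<le> ennreal s"
      using coarse_P(2)[OF c r] by blast
    have "(SUP (D, f)\<in>{(D, f). partial_r_translation r D f}.
                          op_norm_on (mult_dom h) (commutator h D f)) \<le> ennreal s"
    proof (rule SUP_least)
      fix p :: "'a set \<times> ('a \<Rightarrow> 'a)" assume "p \<in> {(D, f). partial_r_translation r D f}"
      then obtain D f where p: "p = (D, f)" and pr: "partial_r_translation r D f" by blast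
      have "op_norm_on (mult_dom h) (commutator h D f) \<le> ennreal s"
        unfolding op_norm_on_def by (rule SUP_least) (use s pr in auto)
      thus "(case p of (D, f) \<Rightarrow> op_norm_on (mult_dom h) (commutator h D f)) \<le> ennreal s"
        by (simp add: p)
    qed
    also have "\<dots> < \<infinity>" by simp
    finally show "(SUP (D, f)\<in>{(D, f). partial_r_translation r D f}.
                          op_norm_on (mult_dom h) (commutator h D f)) < \<infinity>" .
  qed
  have 23: "\<forall>D f. partial_translation D f \<longrightarrow> op_norm_on (mult_dom h) (commutator h D f) < \<infinity>"
    if P2: "\<forall>r>0. (SUP (D, f)\<in>{(D, f). partial_r_translation r D f}.
                          op_norm_on (mult_dom h) (commutator h D f)) < \<infinity>"
  proof (intro allI impI)
    fix D :: "'a set" and f assume "partial_translation D f"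
    then obtain r0 where inj: "inj_on f D" and r0: "\<forall>x\<in>D. dist x (f x) \<le> r0"
      unfolding partial_translation_def by blast
    have pr: "partial_r_translation (max r0 1) D f"
      unfolding partial_r_translation_def using inj r0 by force
    have "op_norm_on (mult_dom h) (commutator h D f) \<le>
          (SUP (D, f)\<in>{(D, f). partial_r_translation (max r0 1) D f}.
                          op_norm_on (mult_dom h) (commutator h D f))"
      using SUP_upper[of "(D, f)" "{(D, f). partial_r_translation (max r0 1) D f}"
           "\<lambda>(D, f). op_norm_on (mult_dom h) (commutator h D f)"] pr by simp
    also have "\<dots> < \<infinity>" using P2 by (meson less_max_iff_disj zero_less_one)
    finally show "op_norm_on (mult_dom h) (commutator h D f) < \<infinity>" .
  qed
  have 31: "coarse_map h"
    if P3: "\<forall>D f. partial_translation D f \<longrightarrow> op_norm_on (mult_dom h) (commutator h D f) < \<infinity>"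
  proof (rule ccontr)
    assume "\<not> coarse_map h"
    then obtain r where r: "r > 0" and nc: "\<forall>s>0. \<exists>x z. dist x z \<le> r \<and> \<bar>h x - h z\<bar> > s"
      unfolding coarse_map_def by (meson not_le)
    from build[OF fin[OF r] nc] P3 show False by blast
  qed
  show ?thesis using coarse_P(1) C2 23 31 by blast
qed

end
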